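(* For $r>0$ let $\mathcal{A}_r\subset\mathbb{R}^2$ be the closed rectangle with vertices $(\pm\sqrt{e^{2r}-1},e^r)$ and $(\pm\sqrt{e^{2r}-1},e^{-r})$, and let $\mathcal{C}_r$ be the closed rectangle with vertices $(e^r,\pm\sqrt{e^{2r}-1})$ and $(e^{-r},\pm\sqrt{e^{2r}-1})$. Then for any $0<r<\log 1.01$ and any $\Lambda\in K_r$, we have $\Lambda_{\mathrm{pr}}\cap(\mathcal{A}_r\cup\mathcal{C}_r)\ne\varnothing$.
   Context: $X=\mathrm{SL}_2(\mathbb{R})/\mathrm{SL}_2(\mathbb{Z})$ is the space of unimodular lattices in $\mathbb{R}^2$. $\|\cdot\|$ is the supremum norm on $\mathbb{R}^2$. For $\Lambda\in X$ let $\Delta(\Lambda)=\sup_{v\in\Lambda\smallsetminus\{0\}}\log(1/\|v\|)$, and for $r\ge0$ let $K_r=\Delta^{-1}([0,r])$. $\Lambda_{\mathrm{pr}}$ denotes the set of primitive vectors of $\Lambda$. *)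

theory Defs
  imports "HOL-Analysis.Analysis"
begin

definition supnorm :: "real \<times> real \<Rightarrow> real" where
  "supnorm v = max \<bar>fst v\<bar> \<bar>snd v\<bar>"

text \<open>A unimodular lattice: the integer span of the columns of a matrix in SL_2(R).\<close>
definition unimodular_lattice :: "(real \<times> real) set \<Rightarrow> bool" where
  "unimodular_lattice L \<longleftrightarrow>
     (\<exists>u w. fst u * snd w - snd u * fst w = 1 \<and>
        L = {of_int a *\<^sub>R u + of_int b *\<^sub>R w | a b. True})"

definition Delta :: "(real \<times> real) set \<Rightarrow> real" where
  "Delta L = (SUP v\<in>L - {0}. ln (1 / supnorm v))"

definition K :: "real \<Rightarrow> (real \<times> real) set set" where
  "K r = {L. unimodular_lattice L \<and> 0 \<le> Delta L \<and> Delta L \<le> r}"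

definition primitive_vectors :: "(real \<times> real) set \<Rightarrow> (real \<times> real) set" where
  "primitive_vectors L =
     {v \<in> L. v \<noteq> 0 \<and> (\<forall>w\<in>L. \<forall>k::int. v = of_int k *\<^sub>R w \<longrightarrow> \<bar>k\<bar> = 1)}"

definition rectA :: "real \<Rightarrow> (real \<times> real) set" where
  "rectA r = {(x, y). \<bar>x\<bar> \<le> sqrt (exp (2 * r) - 1) \<and> exp (- r) \<le> y \<and> y \<le> exp r}"

definition rectC :: "real \<Rightarrow> (real \<times> real) set" where
  "rectC r = {(x, y). exp (- r) \<le> x \<and> x \<le> exp r \<and> \<bar>y\<bar> \<le> sqrt (exp (2 * r) - 1)}"

end

theory Submission
  imports Defs
begin


lemma core:
  fixes a b y0 r :: real
  assumes r0: "0 < r" and r1: "exp r < 101/100"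
    and sa: "sqrt (exp (2*r) - 1) < a" and ab: "a \<le> b"
    and db: "exp (-r) \<le> b" and bD: "b < exp r"
    and H: "\<forall>k::int. max \<bar>(a*(y0+k*b) - 1)/b\<bar> \<bar>y0 + k*b\<bar> \<ge> exp (-r)"
  shows "\<exists>k::int. \<bar>y0+k*b\<bar> \<le> sqrt (exp (2*r) - 1) \<and> exp (-r) \<le> (1 - a*(y0+k*b))/b
            \<and> (1 - a*(y0+k*b))/b \<le> exp r"
proof -
  define d where "d = exp (-r)"
  define D where "D = exp r"
  define s where "s = sqrt (exp (2*r) - 1)"
  have Dd: "D * d = 1" unfolding D_def d_def by (simp add: exp_minus)
  have D1: "D > 1" unfolding D_def using r0 by simp
  have D2: "D < 101/100" using r1 D_def by simp
  have dpos: "d > 0" unfolding d_def by simp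
  have ss: "s^2 = D^2 - 1" unfolding s_def D_def using D1 D_def
    by (simp add: exp_double)
  have s0: "s \<ge> 0" unfolding s_def using D1 D_def by (simp add: exp_double)
  have sh: "s < 1/2"
  proof -
    have "D * D < 10201/10000" using D2 D1 mult_strict_mono[of D "101/100" D "101/100"] by simp
    hence "s * s < 1/4" using ss by (simp add: power2_eq_square)
    thus ?thesis using s0 mult_mono[of "1/2" s "1/2" s] by (cases "s < 1/2") auto
  qed
  have dh: "d > 1/2" proof (rule ccontr)
    assume "\<not> d > 1/2" hence "D*d \<le> (101/100)*(1/2)" using D2 dpos D1 mult_mono[of D "101/100" d "1/2"] by simp
    thus False using Dd by simp
  qed
  have d1: "d < 1" proof (rule ccontr)
    assume "\<not> d < 1" hence "D*d \<ge> D*1" using D1 by (intro mult_left_mono) auto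
    thus False using Dd D1 by simp
  qed
  have a0: "a > 0" using sa s0 s_def by linarith
  have b0: "b > 0" using db dpos d_def by linarith
  define Lw where "Lw = max (-s) ((1 - b*D)/a)"
  define k where "k = \<lceil>(Lw - y0)/b\<rceil>"
  define y where "y = y0 + k*b"
  have k1: "k*b \<ge> Lw - y0" using b0 unfolding k_def
    by (metis ceiling_correct pos_divide_le_eq)
  have k2: "k*b < Lw - y0 + b" 
  proof -
    have "k < (Lw - y0)/b + 1" unfolding k_def by linarith
    hence "k*b < ((Lw - y0)/b + 1)*b" using b0 by (simp add: mult_strict_right_mono)
    thus ?thesis using b0 by (simp add: distrib_right)
  qed
  have yL: "y \<ge> Lw" using k1 y_def by simp
  have yU: "y < Lw + b" using k2 y_def by simp
  have L1: "-s \<le> d - b"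
  proof -
    have "s^2 * d = (D*D - 1)*d" using ss by (simp add: power2_eq_square)
    also have "\<dots> = D*(D*d) - d" by (simp add: algebra_simps)
    finally have "D - d = s^2 * d" using Dd by simp
    moreover have "s*d \<le> 1*1" using sh s0 d1 dpos by (intro mult_mono) auto
    hence "s*(s*d) \<le> s*1" using s0 by (intro mult_left_mono) auto
    ultimately have "D - d \<le> s" by (simp add: power2_eq_square mult.assoc)
    thus ?thesis using bD D_def by linarith
  qed
  have L2: "(1 - b*D)/a \<le> d - b"
  proof -
    have "(b - d)*(a - D) \<le> 0" using db bD ab d_def D_def
      by (simp add: mult_nonneg_nonpos)
    hence "1 - b*D \<le> (d - b)*a" using Dd by (simp add: algebra_simps)
    thus ?thesis using pos_divide_le_eq[OF a0] by simp
  qed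
  have yd: "y < d" using yU L1 L2 Lw_def by linarith
  have ys: "y \<ge> -s" using yL Lw_def by linarith
  have yD: "y \<ge> (1 - b*D)/a" using yL Lw_def by linarith
  have y1: "y \<le> (1 - b*d)/a"
  proof (rule ccontr)
    assume "\<not> ?thesis"
    hence "(1 - b*d)/a < y" by simp
    hence "1 - b*d < y*a" using pos_divide_less_eq[OF a0] by simp
    hence "-d*b < a*y - 1" by (simp add: algebra_simps)
    hence f1: "(a*y - 1)/b > -d" using pos_less_divide_eq[OF b0] by simp
    have "a*d < D*d" using ab bD D_def dpos by simp
    moreover have "a*y < a*d" using yd a0 by simp
    ultimately have "a*y - 1 < 0" using Dd by simp
    hence f2: "(a*y - 1)/b < 0" using b0 by (simp add: divide_neg_pos)
    have "max \<bar>(a*y - 1)/b\<bar> \<bar>y\<bar> < d" using f1 f2 yd ys sh dh by auto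
    moreover have "max \<bar>(a*y - 1)/b\<bar> \<bar>y\<bar> \<ge> d" using H[rule_format, of k] unfolding y_def d_def .
    ultimately show False by linarith
  qed
  have key: "1 - b*d \<le> a* s"
  proof -
    have "b*d \<ge> d * d" using db dpos d_def by (simp add: mult_right_mono)
    moreover have "a* s \<ge> s * s" using mult_right_mono[of s a s] s0 sa unfolding s_def[symmetric] by simp
    moreover have "D * D + d * d \<ge> 2" proof -
      have "0 \<le> (D - d)*(D - d)" by simp
      also have "\<dots> = D * D + d * d - 2*(D*d)" by (simp add: algebra_simps)
      finally show ?thesis using Dd by simp
    qed
    ultimately show ?thesis using ss by (simp add: power2_eq_square)
  qed
  have ys2: "y \<le> s"
  proof -
    have "(1 - b*d)/a \<le> (a* s)/a" using key a0 by (intro divide_right_mono) auto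
    thus ?thesis using y1 a0 by simp
  qed
  have c1: "d \<le> (1 - a*y)/b"
  proof -
    have "y*a \<le> 1 - b*d" using y1 pos_le_divide_eq[OF a0] by simp
    hence "d*b \<le> 1 - a*y" by (simp add: algebra_simps)
    thus ?thesis using pos_le_divide_eq[OF b0] by simp
  qed
  have c2: "(1 - a*y)/b \<le> D"
  proof -
    have "1 - b*D \<le> y*a" using yD pos_divide_le_eq[OF a0] by simp
    hence "1 - a*y \<le> D*b" by (simp add: algebra_simps)
    thus ?thesis using pos_divide_le_eq[OF b0] by simp
  qed
  show ?thesis using ys ys2 c1 c2 unfolding y_def s_def d_def D_def by (intro exI[of _ k]) auto
qed



lemma half:
  fixes a b c d r :: real
  assumes r0: "0 < r" and r1: "exp r < 101/100"
    and det: "a*d - b*c = 1" and ab: "\<bar>a\<bar> \<le> b"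
    and db: "exp (-r) \<le> b" and bD: "b < exp r"
    and H: "\<forall>k::int. supnorm ((c,d) + of_int k *\<^sub>R (a,b)) \<ge> exp (-r)"
  shows "(a,b) \<in> rectA r \<or> (\<exists>k::int. -((c,d) + of_int k *\<^sub>R (a,b)) \<in> rectC r)"
proof -
  define s where "s = sqrt (exp (2*r) - 1)"
  have b0: "b > 0" using db by (smt (verit) exp_gt_zero)
  have cdef: "c = (a*d - 1)/b" using det b0 by (simp add: field_simps)
  consider "\<bar>a\<bar> \<le> s" | "s < a" | "a < -s" by linarith
  thus ?thesis
  proof cases
    case 1
    have "exp (-r) \<le> b" "b \<le> exp r" using db bD by auto
    thus ?thesis using 1 unfolding rectA_def s_def by auto
  next
    case 2
    have H': "\<forall>k::int. max \<bar>(a*(d+k*b) - 1)/b\<bar> \<bar>d + k*b\<bar> \<ge> exp (-r)"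
    proof
      fix k :: int
      have "(a*(d+k*b) - 1)/b = c + k*a" using cdef b0 by (simp add: field_simps)
      thus "max \<bar>(a*(d+k*b) - 1)/b\<bar> \<bar>d + k*b\<bar> \<ge> exp (-r)"
        using H[rule_format, of k] by (simp add: supnorm_def algebra_simps)
    qed
    obtain k :: int where k: "\<bar>d+k*b\<bar> \<le> s" "exp (-r) \<le> (1 - a*(d+k*b))/b"
            "(1 - a*(d+k*b))/b \<le> exp r"
      using core[OF r0 r1 2[unfolded s_def] _ db bD H'] ab unfolding s_def by (meson abs_le_D1)
    have e: "(1 - a*(d+k*b))/b = -(c + k*a)" using cdef b0 by (simp add: field_simps)
    have "-((c,d) + of_int k *\<^sub>R (a,b)) \<in> rectC r"
      using k e unfolding rectC_def s_def by (auto simp: algebra_simps)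
    thus ?thesis by blast
  next
    case 3
    have H': "\<forall>k::int. max \<bar>((-a)*(-d+k*b) - 1)/b\<bar> \<bar>-d + k*b\<bar> \<ge> exp (-r)"
    proof
      fix k :: int
      have eq1: "((-a)*(-d+k*b) - 1)/b = c - k*a" using cdef b0 by (simp add: field_simps)
      have eq2: "\<bar>-d + k*b\<bar> = \<bar>d - k*b\<bar>" by linarith
      have h: "supnorm ((c,d) + of_int (-k) *\<^sub>R (a,b)) = max \<bar>c - k*a\<bar> \<bar>d - k*b\<bar>"
        by (simp add: supnorm_def algebra_simps)
      show "max \<bar>((-a)*(-d+k*b) - 1)/b\<bar> \<bar>-d + k*b\<bar> \<ge> exp (-r)"
        unfolding eq1 eq2 using H[rule_format, of "-k"] h by simp
    qed
    obtain k :: int where k: "\<bar>-d+k*b\<bar> \<le> s" "exp (-r) \<le> (1 - (-a)*(-d+k*b))/b"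
            "(1 - (-a)*(-d+k*b))/b \<le> exp r"
      proof -
      have "sqrt (exp (2*r) - 1) < -a" "-a \<le> b" using 3 ab s_def by auto
      thus ?thesis using core[OF r0 r1 _ _ db bD H'] that unfolding s_def by blast
    qed
    have e: "(1 - (-a)*(-d+k*b))/b = -(c + (-k)*a)" using cdef b0 by (simp add: field_simps)
    have "\<bar>-d + k*b\<bar> = \<bar>-(d + (-k)*b)\<bar>" by simp
    hence "-((c,d) + of_int (-k) *\<^sub>R (a,b)) \<in> rectC r"
      using k e unfolding rectC_def s_def by (auto simp: algebra_simps)
    thus ?thesis by blast
  qed
qed



definition det2 :: "real \<times> real \<Rightarrow> real \<times> real \<Rightarrow> real" where
  "det2 p q = fst p * snd q - snd p * fst q"

definition lat :: "real \<times> real \<Rightarrow> real \<times> real \<Rightarrow> (real \<times> real) set" where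
  "lat u w = {of_int a *\<^sub>R u + of_int b *\<^sub>R w | a b. True}"

lemma det2_lin:
  "det2 (of_int a *\<^sub>R u + of_int b *\<^sub>R w) (of_int c *\<^sub>R u + of_int d *\<^sub>R w)
     = of_int (a*d - b*c) * det2 u w"
  unfolding det2_def by (simp add: algebra_simps)

lemma det2_bound: "\<bar>det2 p q\<bar> \<le> 2 * supnorm p * supnorm q"
proof -
  have "\<bar>det2 p q\<bar> \<le> \<bar>fst p\<bar> * \<bar>snd q\<bar> + \<bar>snd p\<bar> * \<bar>fst q\<bar>"
    unfolding det2_def by (simp add: abs_mult[symmetric])
  also have "\<dots> \<le> supnorm p * supnorm q + supnorm p * supnorm q"
    unfolding supnorm_def by (intro add_mono mult_mono) auto
  finally show ?thesis by simp
qed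

lemma supnorm_nonneg: "supnorm z \<ge> 0" unfolding supnorm_def by auto
lemma supnorm_zero: "supnorm z = 0 \<longleftrightarrow> z = 0"
  unfolding supnorm_def by (cases z) (auto simp: zero_prod_def max_def)
lemma supnorm_scale: "supnorm (c *\<^sub>R z) = \<bar>c\<bar> * supnorm z"
  unfolding supnorm_def by (simp add: abs_mult max_mult_distrib_left)
lemma supnorm_neg: "supnorm (- z) = supnorm z"
  unfolding supnorm_def by simp

lemma lat_mem: "z \<in> lat u w \<longleftrightarrow> (\<exists>a b::int. z = of_int a *\<^sub>R u + of_int b *\<^sub>R w)"
  unfolding lat_def by auto

lemma lat_add: "z1 \<in> lat u w \<Longrightarrow> z2 \<in> lat u w \<Longrightarrow> z1 + z2 \<in> lat u w"
proof -
  assume "z1 \<in> lat u w" "z2 \<in> lat u w"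
  then obtain a b c d :: int where "z1 = of_int a *\<^sub>R u + of_int b *\<^sub>R w" "z2 = of_int c *\<^sub>R u + of_int d *\<^sub>R w"
    unfolding lat_mem by blast
  hence "z1 + z2 = of_int (a+c) *\<^sub>R u + of_int (b+d) *\<^sub>R w" by (simp add: algebra_simps)
  thus ?thesis unfolding lat_mem by blast
qed

lemma lat_smult: "z \<in> lat u w \<Longrightarrow> of_int k *\<^sub>R z \<in> lat u w"
proof -
  assume "z \<in> lat u w"
  then obtain a b :: int where "z = of_int a *\<^sub>R u + of_int b *\<^sub>R w" unfolding lat_mem by blast
  hence "of_int k *\<^sub>R z = of_int (k*a) *\<^sub>R u + of_int (k*b) *\<^sub>R w" by (simp add: algebra_simps)
  thus ?thesis unfolding lat_mem by blast
qed

lemma lat_neg: "z \<in> lat u w \<Longrightarrow> - z \<in> lat u w"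
  using lat_smult[of z u w "-1"] by simp

lemma lat_det_int: "z1 \<in> lat u w \<Longrightarrow> z2 \<in> lat u w \<Longrightarrow> det2 u w = 1 \<Longrightarrow> \<exists>n::int. det2 z1 z2 = of_int n"
proof -
  assume "z1 \<in> lat u w" "z2 \<in> lat u w" "det2 u w = 1"
  then obtain a b c d :: int where "z1 = of_int a *\<^sub>R u + of_int b *\<^sub>R w" "z2 = of_int c *\<^sub>R u + of_int d *\<^sub>R w"
    unfolding lat_mem by blast
  thus ?thesis using det2_lin[of a u b w c d] \<open>det2 u w = 1\<close> by (intro exI[of _ "a*d - b*c"]) simp
qed

lemma lat_prim:
  assumes "det2 u w = 1" "q \<in> lat u w" "z0 \<in> lat u w" "\<bar>det2 z0 q\<bar> = 1"
  shows "q \<in> primitive_vectors (lat u w)"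
  unfolding primitive_vectors_def
proof (intro CollectI conjI ballI allI impI)
  show "q \<in> lat u w" by fact
  show "q \<noteq> 0" using assms(4) by (auto simp: det2_def)
  fix z k assume z: "z \<in> lat u w" and qk: "q = of_int k *\<^sub>R z"
  obtain n :: int where n: "det2 z0 z = of_int n" using lat_det_int[OF assms(3) z assms(1)] by blast
  have "det2 z0 q = of_int k * det2 z0 z" unfolding qk det2_def by (simp add: algebra_simps)
  hence "\<bar>real_of_int (k*n)\<bar> = 1" using assms(4) n by simp
  hence "\<bar>k*n\<bar> = 1" by linarith
  thus "\<bar>k\<bar> = 1" using abs_zmult_eq_1 by blast
qed

lemma lat_lower:
  assumes "det2 u w = 1"
  shows "\<exists>M>0. \<forall>z\<in>lat u w. z \<noteq> 0 \<longrightarrow> supnorm z \<ge> M"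
proof -
  define N where "N = supnorm u + supnorm w"
  have u0: "u \<noteq> 0" using assms by (auto simp: det2_def)
  hence N0: "N > 0" unfolding N_def using supnorm_nonneg[of w] supnorm_zero[of u] supnorm_nonneg[of u] by linarith
  have "\<forall>z\<in>lat u w. z \<noteq> 0 \<longrightarrow> supnorm z \<ge> 1/(2*N)"
  proof (intro ballI impI)
    fix z assume "z \<in> lat u w" "z \<noteq> 0"
    then obtain a b :: int where z: "z = of_int a *\<^sub>R u + of_int b *\<^sub>R w" unfolding lat_mem by blast
    have da: "det2 z w = of_int a" using assms unfolding z det2_def by (simp add: algebra_simps)
    have db: "det2 u z = of_int b" using assms unfolding z det2_def by (simp add: algebra_simps)
    have "a \<noteq> 0 \<or> b \<noteq> 0" using \<open>z \<noteq> 0\<close> z by auto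
    hence "1 \<le> 2 * supnorm z * supnorm w \<or> 1 \<le> 2 * supnorm u * supnorm z"
    proof
      assume "a \<noteq> 0" hence "1 \<le> \<bar>det2 z w\<bar>" using da by simp
      thus ?thesis using det2_bound[of z w] by simp
    next
      assume "b \<noteq> 0" hence "1 \<le> \<bar>det2 u z\<bar>" using db by simp
      thus ?thesis using det2_bound[of u z] by simp
    qed
    hence "1 \<le> 2 * supnorm z * N" unfolding N_def using supnorm_nonneg[of z] supnorm_nonneg[of u] supnorm_nonneg[of w]
      by (smt (verit) distrib_left mult_nonneg_nonneg mult.commute mult.left_commute)
    thus "supnorm z \<ge> 1/(2*N)" using N0 by (simp add: divide_le_eq mult.commute mult.left_commute)
  qed
  thus ?thesis using N0 by (intro exI[of _ "1/(2*N)"]) auto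
qed



lemma swapAC: "(x,y) \<in> rectA r \<longleftrightarrow> (y,x) \<in> rectC r"
  unfolding rectA_def rectC_def by auto

theorem lemma3p1:
  fixes r :: real and L :: "(real \<times> real) set"
  assumes "0 < r" and "r < ln (101 / 100)" and "L \<in> K r"
  shows "primitive_vectors L \<inter> (rectA r \<union> rectC r) \<noteq> {}"
proof -
  have r0: "0 < r" by fact
  have r1: "exp r < 101/100" using assms(2) by (metis exp_less_cancel_iff exp_ln zero_less_divide_iff zero_less_numeral)
  obtain u w where uw: "det2 u w = 1" and Ldef: "L = lat u w"
    using assms(3) unfolding K_def unimodular_lattice_def det2_def lat_def by blast
  have DL: "0 \<le> Delta L" "Delta L \<le> r" using assms(3) unfolding K_def by auto
  obtain M where M0: "M > 0" and M: "\<forall>z\<in>L. z \<noteq> 0 \<longrightarrow> supnorm z \<ge> M"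
    using lat_lower[OF uw] Ldef by blast
  have u0: "u \<noteq> 0" using uw by (auto simp: det2_def)
  have uL: "u \<in> L" unfolding Ldef lat_mem by (intro exI[of _ 1] exI[of _ 0]) simp
  have ne: "L - {0} \<noteq> {}" using u0 uL by blast
  have bdd: "bdd_above ((\<lambda>v. ln (1 / supnorm v)) ` (L - {0}))"
  proof (rule bdd_aboveI2)
    fix z assume "z \<in> L - {0}"
    hence "supnorm z \<ge> M" using M by auto
    hence "1 / supnorm z \<le> 1/M" using M0 by (simp add: frac_le)
    thus "ln (1 / supnorm z) \<le> ln (1/M)" using M0 \<open>supnorm z \<ge> M\<close> by simp
  qed
  have lower: "\<forall>z\<in>L. z \<noteq> 0 \<longrightarrow> supnorm z \<ge> exp (-r)"
  proof (intro ballI impI)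
    fix z assume z: "z \<in> L" "z \<noteq> 0"
    have pos: "supnorm z > 0" using z supnorm_zero[of z] supnorm_nonneg[of z] by linarith
    have "ln (1 / supnorm z) \<le> Delta L" unfolding Delta_def using z bdd by (intro cSUP_upper) auto
    hence "ln (1 / supnorm z) \<le> r" using DL by linarith
    hence "1 / supnorm z \<le> exp r" using pos by (metis exp_le_cancel_iff exp_ln zero_less_divide_1_iff)
    thus "supnorm z \<ge> exp (-r)" using pos by (simp add: exp_minus field_simps)
  qed
  obtain v where vL: "v \<in> L" and v0: "v \<noteq> 0" and vs: "supnorm v < exp r"
  proof -
    have "-r < Delta L" using DL r0 by linarith
    then obtain z where z: "z \<in> L - {0}" "-r < ln (1 / supnorm z)"
      unfolding Delta_def using less_cSUP_iff[OF ne bdd] by blast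
    have pos: "supnorm z > 0" using z supnorm_zero[of z] supnorm_nonneg[of z] by auto
    have "exp (-r) < 1 / supnorm z" using z pos by (metis exp_less_cancel_iff exp_ln zero_less_divide_1_iff)
    hence "supnorm z < exp r" using pos by (simp add: exp_minus field_simps)
    thus ?thesis using that z by blast
  qed
  have vlow: "supnorm v \<ge> exp (-r)" using lower vL v0 by blast
  have ee: "exp r < 2 * exp (-r)"
  proof -
    have "exp r * exp r < 2" using r1 mult_strict_mono[of "exp r" "101/100" "exp r" "101/100"] by simp
    thus ?thesis by (simp add: exp_minus field_simps)
  qed
  obtain p where pL: "p \<in> L" and dvp: "det2 v p = 1"
  proof -
    obtain \<alpha> \<beta> :: int where v: "v = of_int \<alpha> *\<^sub>R u + of_int \<beta> *\<^sub>R w" using vL unfolding Ldef lat_mem by blast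
    define g where "g = gcd \<alpha> \<beta>"
    have nz: "\<alpha> \<noteq> 0 \<or> \<beta> \<noteq> 0" using v v0 by auto
    hence g0: "g > 0" unfolding g_def by simp
    obtain \<alpha>' \<beta>' where a': "\<alpha> = g * \<alpha>'" and b': "\<beta> = g * \<beta>'" unfolding g_def by (meson dvd_def gcd_dvd1 gcd_dvd2)
    define v' where "v' = of_int \<alpha>' *\<^sub>R u + of_int \<beta>' *\<^sub>R w"
    have v'L: "v' \<in> L" unfolding Ldef lat_mem v'_def by blast
    have vv': "v = of_int g *\<^sub>R v'" unfolding v v'_def a' b' by (simp add: algebra_simps)
    have "v' \<noteq> 0" using vv' v0 by auto
    hence "supnorm v' \<ge> exp (-r)" using lower v'L by blast
    have g1: "g = 1"
    proof (rule ccontr)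
      assume "g \<noteq> 1" hence "g \<ge> 2" using g0 by linarith
      have "supnorm v = real_of_int g * supnorm v'" using vv' g0 by (simp add: supnorm_scale)
      also have "\<dots> \<ge> 2 * exp (-r)" using \<open>g \<ge> 2\<close> \<open>supnorm v' \<ge> exp (-r)\<close>
        by (intro mult_mono) auto
      finally show False using vs ee by linarith
    qed
    obtain x y :: int where xy: "x * \<alpha> + y * \<beta> = 1" using bezout_int[of \<alpha> \<beta>] g1 g_def by metis
    define p where "p = of_int (-y) *\<^sub>R u + of_int x *\<^sub>R w"
    have "p \<in> L" unfolding Ldef lat_mem p_def by blast
    moreover have "det2 v p = 1" unfolding v p_def det2_lin uw using xy
      by (simp add: algebra_simps)
    ultimately show ?thesis using that by blast
  qed
  have v0': "v \<noteq> 0" by fact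
  have primv: "v \<in> primitive_vectors L" "-v \<in> primitive_vectors L"
    using lat_prim[OF uw, of v p] lat_prim[OF uw, of "-v" p] vL pL lat_neg dvp Ldef
    by (auto simp: det2_def algebra_simps)
  have linL: "\<And>k::int. p + of_int k *\<^sub>R v \<in> L" using pL vL lat_add lat_smult Ldef by blast
  have primq: "\<And>k::int. p + of_int k *\<^sub>R v \<in> primitive_vectors L"
    "\<And>k::int. -(p + of_int k *\<^sub>R v) \<in> primitive_vectors L"
  proof -
    fix k :: int
    have d1: "det2 v (p + of_int k *\<^sub>R v) = 1" using dvp by (simp add: det2_def algebra_simps)
    show "p + of_int k *\<^sub>R v \<in> primitive_vectors L" using lat_prim[OF uw, of _ v] linL[of k] vL d1 Ldef by auto
    have d2: "det2 v (-(p + of_int k *\<^sub>R v)) = -1" using d1 by (simp add: det2_def algebra_simps)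
    show "-(p + of_int k *\<^sub>R v) \<in> primitive_vectors L" unfolding Ldef
      using lat_prim[OF uw lat_neg[OF linL[of k, unfolded Ldef]], of v] vL d2 Ldef by simp
  qed
  have lowq: "\<And>k::int. supnorm (p + of_int k *\<^sub>R v) \<ge> exp (-r)"
  proof -
    fix k :: int
    have "det2 v (p + of_int k *\<^sub>R v) = 1" using dvp by (simp add: det2_def algebra_simps)
    moreover have "det2 v 0 = 0" by (simp add: det2_def)
    ultimately have "p + of_int k *\<^sub>R v \<noteq> 0" by force
    thus "supnorm (p + of_int k *\<^sub>R v) \<ge> exp (-r)" using lower linL by blast
  qed
  obtain a b where vab: "v = (a,b)" by (cases v)
  obtain c d where pcd: "p = (c,d)" by (cases p)
  have det: "a*d - b*c = 1" using dvp unfolding vab pcd det2_def by simp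
  have nv: "exp (-r) \<le> max \<bar>a\<bar> \<bar>b\<bar>" "max \<bar>a\<bar> \<bar>b\<bar> < exp r"
    using vlow vs unfolding vab supnorm_def by auto
  have lowq': "\<And>k::int. supnorm ((c,d) + of_int k *\<^sub>R (a,b)) \<ge> exp (-r)"
    using lowq unfolding vab pcd .
  have pq1: "\<And>k::int. (c,d) + of_int k *\<^sub>R (a,b) \<in> primitive_vectors L"
    using primq(1) unfolding vab pcd .
  have pq2: "\<And>k::int. -((c,d) + of_int k *\<^sub>R (a,b)) \<in> primitive_vectors L"
    using primq(2) unfolding vab pcd .
  have pv: "(a,b) \<in> primitive_vectors L" "(-a,-b) \<in> primitive_vectors L"
    using primv unfolding vab by auto
  consider "\<bar>a\<bar> \<le> b" | "\<bar>a\<bar> \<le> -b" | "\<bar>b\<bar> \<le> a" | "\<bar>b\<bar> \<le> -a" by linarith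
  thus ?thesis
  proof cases
    case 1
    have "exp (-r) \<le> b" "b < exp r" using nv 1 by auto
    from half[OF r0 r1 det 1 this] lowq'
    consider "(a,b) \<in> rectA r" | k :: int where "-((c,d) + of_int k *\<^sub>R (a,b)) \<in> rectC r" by blast
    thus ?thesis
    proof cases
      case 1 thus ?thesis using pv by blast
    next
      case (2 k) thus ?thesis using pq2[of k] by blast
    qed
  next
    case 2
    have "exp (-r) \<le> -b" "-b < exp r" using nv 2 by auto
    moreover have "(-a)*(-d) - (-b)*(-c) = 1" using det by simp
    moreover have "\<forall>k::int. supnorm ((-c,-d) + of_int k *\<^sub>R (-a,-b)) \<ge> exp (-r)"
    proof
      fix k :: int
      have "supnorm ((-c,-d) + of_int k *\<^sub>R (-a,-b)) = supnorm ((c,d) + of_int k *\<^sub>R (a,b))"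
        by (simp add: supnorm_def; smt (verit))
      thus "supnorm ((-c,-d) + of_int k *\<^sub>R (-a,-b)) \<ge> exp (-r)" using lowq'[of k] by simp
    qed
    moreover have "\<bar>-a\<bar> \<le> -b" using 2 by simp
    ultimately have "(-a,-b) \<in> rectA r \<or> (\<exists>k::int. -((-c,-d) + of_int k *\<^sub>R (-a,-b)) \<in> rectC r)"
      using half[OF r0 r1] by blast
    then consider "(-a,-b) \<in> rectA r" | k :: int where "-((-c,-d) + of_int k *\<^sub>R (-a,-b)) \<in> rectC r" by blast
    thus ?thesis
    proof cases
      case 1 thus ?thesis using pv by blast
    next
      case (2 k)
      have eq: "-((-c,-d) + of_int k *\<^sub>R (-a,-b)) = (c,d) + of_int k *\<^sub>R (a,b)" by simp
      show ?thesis using 2[unfolded eq] pq1[of k] by blast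
    qed
  next
    case 3
    have "exp (-r) \<le> a" "a < exp r" using nv 3 by auto
    moreover have "b*(-c) - a*(-d) = 1" using det by simp
    moreover have "\<forall>k::int. supnorm ((-d,-c) + of_int k *\<^sub>R (b,a)) \<ge> exp (-r)"
    proof
      fix k :: int
      have "supnorm ((-d,-c) + of_int k *\<^sub>R (b,a)) = supnorm ((c,d) + of_int (-k) *\<^sub>R (a,b))"
        by (simp add: supnorm_def; smt (verit))
      thus "supnorm ((-d,-c) + of_int k *\<^sub>R (b,a)) \<ge> exp (-r)" using lowq'[of "-k"] by simp
    qed
    moreover have "\<bar>b\<bar> \<le> a" using 3 by simp
    ultimately have "(b,a) \<in> rectA r \<or> (\<exists>k::int. -((-d,-c) + of_int k *\<^sub>R (b,a)) \<in> rectC r)"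
      using half[OF r0 r1] by blast
    then consider "(b,a) \<in> rectA r" | k :: int where "-((-d,-c) + of_int k *\<^sub>R (b,a)) \<in> rectC r" by blast
    thus ?thesis
    proof cases
      case 1 thus ?thesis using pv swapAC by blast
    next
      case (2 k)
      have "-((-d,-c) + of_int k *\<^sub>R (b,a)) = (d - k*b, c - k*a)" by simp
      hence "(c - k*a, d - k*b) \<in> rectA r" using 2 swapAC by metis
      moreover have "(c,d) + of_int (-k) *\<^sub>R (a,b) = (c - k*a, d - k*b)" by simp
      ultimately show ?thesis using pq1[of "-k"] by (metis IntI UnCI empty_iff)
    qed
  next
    case 4
    have "exp (-r) \<le> -a" "-a < exp r" using nv 4 by auto
    moreover have "(-b)*c - (-a)*d = 1" using det by simp
    moreover have "\<forall>k::int. supnorm ((d,c) + of_int k *\<^sub>R (-b,-a)) \<ge> exp (-r)"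
    proof
      fix k :: int
      have "supnorm ((d,c) + of_int k *\<^sub>R (-b,-a)) = supnorm ((c,d) + of_int (-k) *\<^sub>R (a,b))"
        by (simp add: supnorm_def; smt (verit))
      thus "supnorm ((d,c) + of_int k *\<^sub>R (-b,-a)) \<ge> exp (-r)" using lowq'[of "-k"] by simp
    qed
    moreover have "\<bar>-b\<bar> \<le> -a" using 4 by simp
    ultimately have "(-b,-a) \<in> rectA r \<or> (\<exists>k::int. -((d,c) + of_int k *\<^sub>R (-b,-a)) \<in> rectC r)"
      using half[OF r0 r1] by blast
    then consider "(-b,-a) \<in> rectA r" | k :: int where "-((d,c) + of_int k *\<^sub>R (-b,-a)) \<in> rectC r" by blast
    thus ?thesis
    proof cases
      case 1 thus ?thesis using pv swapAC by blast
    next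
      case (2 k)
      have "-((d,c) + of_int k *\<^sub>R (-b,-a)) = (-d + k*b, -c + k*a)" by simp
      hence "(-c + k*a, -d + k*b) \<in> rectA r" using 2 swapAC by metis
      moreover have "-((c,d) + of_int (-k) *\<^sub>R (a,b)) = (-c + k*a, -d + k*b)" by simp
      ultimately show ?thesis using pq2[of "-k"] by (metis IntI UnCI empty_iff)
    qed
  qed
qed


end
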